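(* Consider online multiclass classification with an arbitrary feedback graph $\mathcal{G}=([K],\mathcal{E})$, and suppose that for every round $t$, $\ell_t=\ell(\cdot,\mathbf{x}_t,y_t)$ is a regular surrogate loss with respect to $\ell$ with constant $L$. Suppose the OCO algorithm $\mathcal{A}$ satisfies, for some $h:\mathcal{W}\to\mathbb{R}_+$ and every $\mathbf{U}\in\mathcal{W}$, $\sum_{t=1}^T(\widehat\ell_t(\mathbf{W}_t)-\widehat\ell_t(\mathbf{U}))\le h(\mathbf{U})\sqrt{\sum_{t=1}^T\|\widehat{\mathbf{g}}_t\|^2}$ with $\widehat{\mathbf{g}}_t=v_t\nabla\ell_t(\mathbf{W}_t)$. Then for any realization of the randomized predictions $y_1',\dots,y_T'$, Gappletron run on $\mathcal{G}$ with $\mathcal{A}$ and a gap map $a:\mathbb{R}^{K\times d}\times\mathbb{R}^d\to[0,1]$ satisfying $a(\mathbf{W}_t,\mathbf{x}_t)=\ell(\mathbf{W}_t,\mathbf{x}_t,y_t^\star)$ satisfies, for all $\mathbf{U}\in\mathcal{W}$, $$\sum_{t=1}^T\sum_{y\in[K]}p_t'(y)\mathbb{1}[y\ne y_t]\le\sum_{t=1}^T\widehat\ell_t(\mathbf{U})+\sum_{t=1}^T\gamma_t+\inf_{\eta>0}\Big\{\frac{h(\mathbf{U})^2}{2\eta}+\sum_{t=1}^T\Big(\frac{K-1}{K}\ell_t(\mathbf{W}_t)-v_t\ell_t(\mathbf{W}_t)+\eta v_t^2L\ell_t(\mathbf{W}_t)\Big)\Big\}.$$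
   Context: Setting: for $t=1,\dots,T$ an oblivious adversary fixes $\mathbf{x}_t\in\mathbb{R}^d$ and $y_t\in[K]=\{1,\dots,K\}$; the learner sees $\mathbf{x}_t$ and predicts $y_t'\in[K]$. A feedback graph is a directed graph $\mathcal{G}=([K],\mathcal{E})$ in which every node has at least one incoming edge (self-loops allowed); $\mathrm{out}(y')=\{y:(y',y)\in\mathcal{E}\}$. After predicting $y_t'$ the learner observes $(y,\mathbb{1}[y\ne y_t])$ for $y\in\mathrm{out}(y_t')$; if a node has $K-1$ outgoing edges the missing edge is added. $\mathcal{Q}=\{y':\mathrm{out}(y')=[K]\}$ (revealing actions, possibly empty). A dominating set is $S\subseteq[K]$ such that every $y\in[K]$ lies in $\mathrm{out}(y')$ for some $y'\in S$; $\rho$ is the minimum size of a dominating set and $S$ is a minimum dominating set. $\mathbf{1}$ all-ones vector, $\mathbf{1}_S$ indicator of $S$, $\mathbf{e}_k$ basis vectors of $\mathbb{R}^K$; $P_t$ is probability conditional on past predictions and feedback. Predictors $\mathbf{W}\in\mathcal{W}\subseteq\mathbb{R}^{K\times d}$ ($\mathcal{W}$ convex), rows $\mathbf{W}^k$, identified with vectors of $\mathbb{R}^{Kd}$; $\|\cdot\|$ a fixed norm on $\mathbb{R}^{Kd}$. $\ell:\mathcal{W}\times\mathbb{R}^d\times[K]\to\mathbb{R}_+$ is convex in $\mathbf{W}$ with $\frac{K-1}{K}\ell(\mathbf{W},\mathbf{x},y)+\frac1K\ell(\mathbf{W},\mathbf{x},y^\star)\ge1$ for all $\mathbf{W},\mathbf{x}$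 and $y\ne y^\star:=\arg\max_k\langle\mathbf{W}^k,\mathbf{x}\rangle$; $\ell_t$ is regular with constant $L>0$ if moreover $\|\nabla\ell_t(\mathbf{W})\|^2\le2L\ell_t(\mathbf{W})$ for all $\mathbf{W}\in\mathcal{W}$. Gappletron (inputs $\mathcal{Q}$, $S$, OCO algorithm $\mathcal{A}$ on $\mathcal{W}$, $\gamma\ge0$, gap map $a$): $\mathbf{W}_1$ from $\mathcal{A}$; at round $t$: $y_t^\star=\arg\max_k\langle\mathbf{W}_t^k,\mathbf{x}_t\rangle$; $\gamma_t=0$ if $y_t^\star\in\mathcal{Q}$, else $\gamma_t=\min\{\tfrac12,\gamma/\sqrt{|\{s\le t:y_s^\star\notin\mathcal{Q}\}|}\}$; $a_t=a(\mathbf{W}_t,\mathbf{x}_t)$; $\zeta_t=\mathbb{1}[\gamma_t\le a_t]$; $\mathbf{p}_t'=(1-\zeta_ta_t-(1-\zeta_t)\gamma_t)\mathbf{e}_{y_t^\star}+\zeta_ta_t\frac1K\mathbf{1}+(1-\zeta_t)\frac{\gamma_t}{\rho}\mathbf{1}_S$; predict $y_t'\sim\mathbf{p}_t'$; $v_t=\mathbb{1}[y_t\in\mathrm{out}(y_t')]/P_t(y_t\in\mathrm{out}(y_t'))$; $\widehat\ell_t(\mathbf{W})=v_t\ell_t(\mathbf{W})$ is fed to $\mathcal{A}$, which returns $\mathbf{W}_{t+1}$. *)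

theory Defs
  imports "HOL-Analysis.Analysis"
begin

text \<open>Labels [K] are the elements of a finite type 'k, so K = CARD('k).
A feedback graph is a relation G on labels; G y' y means (y',y) is an edge.\<close>

definition feedback_graph :: "('k \<Rightarrow> 'k \<Rightarrow> bool) \<Rightarrow> bool" where
  "feedback_graph G \<longleftrightarrow> (\<forall>y. \<exists>y'. G y' y)"

text \<open>Out-neighbourhood after the preprocessing step: if a node has K-1 outgoing
edges, the missing edge is added (so its out-neighbourhood becomes all of [K]).\<close>
definition out_aug :: "('k::finite \<Rightarrow> 'k \<Rightarrow> bool) \<Rightarrow> 'k \<Rightarrow> 'k set" where
  "out_aug G y' = (if card {z. G y' z} = CARD('k) - 1 then UNIV else {z. G y' z})"

definition revealing :: "('k::finite \<Rightarrow> 'k \<Rightarrow> bool) \<Rightarrow> 'k set" where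
  "revealing G = {y'. out_aug G y' = UNIV}"

definition dominating :: "('k::finite \<Rightarrow> 'k \<Rightarrow> bool) \<Rightarrow> 'k set \<Rightarrow> bool" where
  "dominating G S \<longleftrightarrow> (\<forall>y. \<exists>y'\<in>S. y \<in> out_aug G y')"

definition min_dominating :: "('k::finite \<Rightarrow> 'k \<Rightarrow> bool) \<Rightarrow> 'k set \<Rightarrow> bool" where
  "min_dominating G S \<longleftrightarrow> dominating G S \<and> (\<forall>S'. dominating G S' \<longrightarrow> card S \<le> card S')"

text \<open>Exploration rate gamma_t of Gappletron (rounds are indexed 1..T);
ys t is the greedy label y_t^star.\<close>
definition gappl_gamma :: "'k set \<Rightarrow> real \<Rightarrow> (nat \<Rightarrow> 'k) \<Rightarrow> nat \<Rightarrow> real" where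
  "gappl_gamma Q \<gamma> ys t =
     (if ys t \<in> Q then 0
      else min (1/2) (\<gamma> / sqrt (real (card {s \<in> {1..t}. ys s \<notin> Q}))))"

text \<open>Gappletron's sampling distribution p'_t, given the dominating set S,
the exploration rate gam = gamma_t, the greedy label ystar and the gap a = a_t.\<close>
definition gappl_p :: "'k::finite set \<Rightarrow> real \<Rightarrow> 'k \<Rightarrow> real \<Rightarrow> 'k \<Rightarrow> real" where
  "gappl_p S gam ystar a y =
     (let \<zeta> = (if gam \<le> a then 1 else 0 :: real) in
        (1 - \<zeta> * a - (1 - \<zeta>) * gam) * (if y = ystar then 1 else 0)
        + \<zeta> * a / real CARD('k)
        + (1 - \<zeta>) * gam / real (card S) * (if y \<in> S then 1 else 0))"

definition obs_prob :: "('k::finite \<Rightarrow> 'k \<Rightarrow> bool) \<Rightarrow> ('k \<Rightarrow> real) \<Rightarrow> 'k \<Rightarrow> real" where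
  "obs_prob G p y = (\<Sum>y'\<in>{y'. y \<in> out_aug G y'}. p y')"

definition imp_weight :: "('k::finite \<Rightarrow> 'k \<Rightarrow> bool) \<Rightarrow> ('k \<Rightarrow> real) \<Rightarrow> 'k \<Rightarrow> 'k \<Rightarrow> real" where
  "imp_weight G p ypred y = (if y \<in> out_aug G ypred then 1 else 0) / obs_prob G p y"

end

theory Submission
  imports Defs
begin

lemma sum_form:
  fixes S :: "'k::finite set"
  shows "(\<Sum>k\<in>UNIV. (A * (if k = ys then 1 else 0) + B + C * (if k \<in> S then 1 else 0)) * (if k \<noteq> y then 1 else 0))
     = A * (if ys \<noteq> y then 1 else 0) + B * (real CARD('k) - 1) + C * real (card (S - {y}))"
proof -
  have "(\<Sum>k\<in>UNIV. (A * (if k = ys then 1 else 0) + B + C * (if k \<in> S then 1 else 0)) * (if k \<noteq> y then 1 else 0))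
      = (\<Sum>k\<in>UNIV - {y}. A * (if k = ys then 1 else 0) + B + C * (if k \<in> S then 1 else 0))"
    by (subst sum.remove[of UNIV y]) (auto intro!: sum.cong)
  also have "\<dots> = (\<Sum>k\<in>UNIV - {y}. A * (if k = ys then 1 else 0)) + (\<Sum>k\<in>UNIV - {y}. B) + (\<Sum>k\<in>UNIV - {y}. C * (if k \<in> S then 1 else 0))"
    by (simp add: sum.distrib)
  also have "(\<Sum>k\<in>UNIV - {y}. A * (if k = ys then 1 else 0)) = A * (if ys \<noteq> y then 1 else 0)"
    by (simp add: sum_distrib_left[symmetric])
  also have "(\<Sum>k\<in>UNIV - {y}. B) = B * (real CARD('k) - 1)"
    by (simp add: card_Diff_singleton of_nat_diff)
  also have "(\<Sum>k\<in>UNIV - {y}. C * (if k \<in> S then 1 else 0)) = C * real (card (S - {y}))"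
  proof -
    have "(\<Sum>k\<in>UNIV - {y}. (if k \<in> S then 1 else 0::real)) = real (card (S - {y}))"
      by (subst sum.inter_filter[symmetric]) (auto intro!: arg_cong[where f=card])
    thus ?thesis by (simp add: sum_distrib_left[symmetric])
  qed
  finally show ?thesis .
qed

lemma round_bound:
  fixes S :: "'k::finite set"
  assumes g0: "0 \<le> g" and a0: "0 \<le> a" and a1: "a \<le> 1" and l0: "0 \<le> l"
    and sur: "ys \<noteq> y \<Longrightarrow> (real CARD('k) - 1) / real CARD('k) * l + 1 / real CARD('k) * a \<ge> 1"
    and eq: "ys = y \<Longrightarrow> l = a"
  shows "(\<Sum>k\<in>UNIV. gappl_p S g ys a k * (if k \<noteq> y then 1 else 0))
     \<le> (real CARD('k) - 1) / real CARD('k) * l + g"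
proof -
  define z where "z = (if g \<le> a then 1 else 0 :: real)"
  define C where "C = (1 - z) * g / real (card S)"
  have p: "gappl_p S g ys a = (\<lambda>k. (1 - z * a - (1 - z) * g) * (if k = ys then 1 else 0)
        + z * a / real CARD('k) + C * (if k \<in> S then 1 else 0))"
    unfolding gappl_p_def z_def C_def Let_def by (auto simp: fun_eq_iff)
  have K: "real CARD('k) \<ge> 1" by simp
  have CS: "C * real (card (S - {y})) \<le> (1 - z) * g"
  proof (cases "card S = 0")
    case True thus ?thesis using g0 by (simp add: C_def z_def)
  next
    case False
    have "card (S - {y}) \<le> card S" by (rule card_mono) auto
    hence "C * real (card (S - {y})) \<le> C * real (card S)"
      using g0 by (intro mult_left_mono) (auto simp: C_def z_def)
    also have "\<dots> = (1 - z) * g" using False by (simp add: C_def)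
    finally show ?thesis .
  qed
  have "(\<Sum>k\<in>UNIV. gappl_p S g ys a k * (if k \<noteq> y then 1 else 0))
     = (1 - z * a - (1 - z) * g) * (if ys \<noteq> y then 1 else 0) + z * a / real CARD('k) * (real CARD('k) - 1)
       + C * real (card (S - {y}))"
    unfolding p by (rule sum_form)
  also have "\<dots> \<le> (real CARD('k) - 1) / real CARD('k) * l + g"
  proof (cases "g \<le> a")
    case True
    hence z: "z = 1" by (simp add: z_def)
    show ?thesis
    proof (cases "ys = y")
      case True
      thus ?thesis using z eq CS g0 by (simp add: field_simps)
    next
      case False
      have "(1 - a) + a / real CARD('k) * (real CARD('k) - 1) = 1 - a / real CARD('k)"
        using K by (simp add: field_simps)
      also have "\<dots> \<le> (real CARD('k) - 1) / real CARD('k) * l" using sur[OF False] by simp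
      finally show ?thesis using False z CS g0 by simp
    qed
  next
    case False
    hence z: "z = 0" by (simp add: z_def)
    show ?thesis
    proof (cases "ys = y")
      case True
      have "0 \<le> (real CARD('k) - 1) / real CARD('k) * l" using K l0 by simp
      thus ?thesis using True z CS by simp
    next
      case ne: False
      have "a / real CARD('k) \<le> a" using K a0 mult_left_mono[OF K a0] by (simp add: field_simps)
      hence "1 - g \<le> (real CARD('k) - 1) / real CARD('k) * l" using sur[OF ne] False by simp
      thus ?thesis using ne z CS by simp
    qed
  qed
  finally show ?thesis .
qed

lemma amgm:
  fixes h X eta :: real
  assumes "h \<ge> 0" "X \<ge> 0" "eta > 0"
  shows "h * sqrt (2 * X) \<le> h ^ 2 / (2 * eta) + eta * X"
proof -
  have e: "(h - eta * sqrt (2 * X)) ^ 2 \<ge> 0" by simp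
  have "(h - eta * sqrt (2 * X)) ^ 2 = h^2 - 2 * eta * h * sqrt (2*X) + eta^2 * (2 * X)"
    using assms by (simp add: power2_eq_square algebra_simps real_sqrt_mult)
  hence "2 * eta * (h * sqrt (2 * X)) \<le> h^2 + 2 * eta * (eta * X)" using e assms by (simp add: algebra_simps power2_eq_square)
  thus ?thesis using assms by (simp add: field_simps)
qed

theorem lemma2:
  fixes G :: "'k::finite \<Rightarrow> 'k \<Rightarrow> bool"
    and S :: "'k set"
    and Wset :: "(real^'d::finite^'k) set"
    and nrm :: "real^'d^'k \<Rightarrow> real"
    and loss :: "real^'d^'k \<Rightarrow> real^'d \<Rightarrow> 'k \<Rightarrow> real"
    and grad :: "nat \<Rightarrow> real^'d^'k \<Rightarrow> real^'d^'k"
    and amax :: "real^'d^'k \<Rightarrow> real^'d \<Rightarrow> 'k"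
    and a :: "real^'d^'k \<Rightarrow> real^'d \<Rightarrow> real"
    and h :: "real^'d^'k \<Rightarrow> real"
    and L \<gamma> :: real
    and T :: nat
    and x :: "nat \<Rightarrow> real^'d"
    and y :: "nat \<Rightarrow> 'k"
    and W :: "nat \<Rightarrow> real^'d^'k"
    and ypred :: "nat \<Rightarrow> 'k"
    and ys :: "nat \<Rightarrow> 'k" and gam :: "nat \<Rightarrow> real"
    and p :: "nat \<Rightarrow> 'k \<Rightarrow> real" and v :: "nat \<Rightarrow> real"
  defines "ys \<equiv> (\<lambda>t. amax (W t) (x t))"
    and "gam \<equiv> gappl_gamma (revealing G) \<gamma> ys"
    and "p \<equiv> (\<lambda>t. gappl_p S (gam t) (ys t) (a (W t) (x t)))"
    and "v \<equiv> (\<lambda>t. imp_weight G (p t) (ypred t) (y t))"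
  assumes graph: "feedback_graph G"
    and S_min: "min_dominating G S"
    and W_convex: "convex Wset"
    and nrm_nonneg: "\<forall>V. nrm V \<ge> 0"
    and nrm_zero: "\<forall>V. nrm V = 0 \<longleftrightarrow> V = 0"
    and nrm_triangle: "\<forall>V V'. nrm (V + V') \<le> nrm V + nrm V'"
    and nrm_scale: "\<forall>c V. nrm (c *\<^sub>R V) = \<bar>c\<bar> * nrm V"
    and amax_is_argmax: "\<forall>V z j. inner (V $ j) z \<le> inner (V $ (amax V z)) z"
    and loss_nonneg: "\<forall>V\<in>Wset. \<forall>z k. loss V z k \<ge> 0"
    and loss_convex: "\<forall>z k. convex_on Wset (\<lambda>V. loss V z k)"
    and loss_surrogate: "\<forall>V\<in>Wset. \<forall>z k. k \<noteq> amax V z \<longrightarrow>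
        (real CARD('k) - 1) / real CARD('k) * loss V z k
        + 1 / real CARD('k) * loss V z (amax V z) \<ge> 1"
    and L_pos: "L > 0"
    and grad_deriv: "\<forall>t\<in>{1..T}. \<forall>V\<in>Wset.
        ((\<lambda>U. loss U (x t) (y t)) has_derivative (\<lambda>H. inner (grad t V) H)) (at V within Wset)"
    and regular: "\<forall>t\<in>{1..T}. \<forall>V\<in>Wset. (nrm (grad t V))\<^sup>2 \<le> 2 * L * loss V (x t) (y t)"
    and gamma_nonneg: "\<gamma> \<ge> 0"
    and a_range: "\<forall>V z. 0 \<le> a V z \<and> a V z \<le> 1"
    and a_gap: "\<forall>t\<in>{1..T}. a (W t) (x t) = loss (W t) (x t) (ys t)"
    and W_in: "\<forall>t\<in>{1..T}. W t \<in> Wset"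
    and h_nonneg: "\<forall>U\<in>Wset. h U \<ge> 0"
    and oco_regret: "\<forall>U\<in>Wset.
        (\<Sum>t=1..T. v t * loss (W t) (x t) (y t) - v t * loss U (x t) (y t))
          \<le> h U * sqrt (\<Sum>t=1..T. (nrm (v t *\<^sub>R grad t (W t)))\<^sup>2)"
    and realization: "\<forall>t\<in>{1..T}. p t (ypred t) > 0"
  shows "\<forall>U\<in>Wset.
    (\<Sum>t=1..T. \<Sum>k\<in>UNIV. p t k * (if k \<noteq> y t then 1 else 0))
      \<le> (\<Sum>t=1..T. v t * loss U (x t) (y t)) + (\<Sum>t=1..T. gam t)
        + (INF \<eta>\<in>{0<..}. h U ^ 2 / (2 * \<eta>)
            + (\<Sum>t=1..T. (real CARD('k) - 1) / real CARD('k) * loss (W t) (x t) (y t)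
                 - v t * loss (W t) (x t) (y t)
                 + \<eta> * (v t)\<^sup>2 * L * loss (W t) (x t) (y t)))"
proof
  fix U assume U: "U \<in> Wset"
  define c where "c = (real CARD('k) - 1) / real CARD('k)"
  define l where "l = (\<lambda>t. loss (W t) (x t) (y t))"
  define X where "X = (\<Sum>t=1..T. (v t)\<^sup>2 * L * l t)"
  have l0: "\<And>t. t \<in> {1..T} \<Longrightarrow> 0 \<le> l t" using loss_nonneg W_in by (simp add: l_def)
  have X0: "X \<ge> 0" unfolding X_def using l0 L_pos by (intro sum_nonneg) simp
  have gam0: "\<And>t. gam t \<ge> 0" using gamma_nonneg by (simp add: gam_def gappl_gamma_def)
  have rnd: "\<And>t. t \<in> {1..T} \<Longrightarrow> (\<Sum>k\<in>UNIV. p t k * (if k \<noteq> y t then 1 else 0)) \<le> c * l t + gam t"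
  proof -
    fix t assume t: "t \<in> {1..T}"
    show "(\<Sum>k\<in>UNIV. p t k * (if k \<noteq> y t then 1 else 0)) \<le> c * l t + gam t"
      unfolding p_def c_def
    proof (rule round_bound)
      show "0 \<le> gam t" by (rule gam0)
      show "0 \<le> a (W t) (x t)" "a (W t) (x t) \<le> 1" using a_range by auto
      show "0 \<le> l t" using l0 t .
      show "ys t \<noteq> y t \<Longrightarrow> 1 \<le> (real CARD('k) - 1) / real CARD('k) * l t + 1 / real CARD('k) * a (W t) (x t)"
        using loss_surrogate W_in t a_gap unfolding l_def ys_def by auto
      show "ys t = y t \<Longrightarrow> l t = a (W t) (x t)"
        using a_gap t unfolding l_def by auto
    qed
  qed
  have lhs: "(\<Sum>t=1..T. \<Sum>k\<in>UNIV. p t k * (if k \<noteq> y t then 1 else 0)) \<le> (\<Sum>t=1..T. c * l t) + (\<Sum>t=1..T. gam t)"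
    unfolding sum.distrib[symmetric] by (rule sum_mono) (rule rnd)
  have sq: "(\<Sum>t=1..T. (nrm (v t *\<^sub>R grad t (W t)))\<^sup>2) \<le> 2 * X"
    unfolding X_def sum_distrib_left
  proof (rule sum_mono)
    fix t assume t: "t \<in> {1..T}"
    have "(nrm (v t *\<^sub>R grad t (W t)))\<^sup>2 = (v t)\<^sup>2 * (nrm (grad t (W t)))\<^sup>2"
      using nrm_scale by (simp add: power_mult_distrib)
    also have "\<dots> \<le> (v t)\<^sup>2 * (2 * L * l t)"
      using regular W_in t by (intro mult_left_mono) (auto simp: l_def)
    finally show "(nrm (v t *\<^sub>R grad t (W t)))\<^sup>2 \<le> 2 * ((v t)\<^sup>2 * L * l t)" by (simp add: algebra_simps)
  qed
  have reg: "(\<Sum>t=1..T. v t * l t) - (\<Sum>t=1..T. v t * loss U (x t) (y t)) \<le> h U * sqrt (2 * X)"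
  proof -
    have "(\<Sum>t=1..T. v t * l t) - (\<Sum>t=1..T. v t * loss U (x t) (y t))
        = (\<Sum>t=1..T. v t * loss (W t) (x t) (y t) - v t * loss U (x t) (y t))"
      by (simp add: sum_subtractf l_def)
    also have "\<dots> \<le> h U * sqrt (\<Sum>t=1..T. (nrm (v t *\<^sub>R grad t (W t)))\<^sup>2)" using oco_regret U by blast
    also have "\<dots> \<le> h U * sqrt (2 * X)" using sq h_nonneg U by (intro mult_left_mono) auto
    finally show ?thesis .
  qed
  show "(\<Sum>t=1..T. \<Sum>k\<in>UNIV. p t k * (if k \<noteq> y t then 1 else 0))
      \<le> (\<Sum>t=1..T. v t * loss U (x t) (y t)) + (\<Sum>t=1..T. gam t)
        + (INF \<eta>\<in>{0<..}. h U ^ 2 / (2 * \<eta>)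
            + (\<Sum>t=1..T. (real CARD('k) - 1) / real CARD('k) * loss (W t) (x t) (y t)
                 - v t * loss (W t) (x t) (y t)
                 + \<eta> * (v t)\<^sup>2 * L * loss (W t) (x t) (y t)))"
  proof -
    let ?L = "(\<Sum>t=1..T. \<Sum>k\<in>UNIV. p t k * (if k \<noteq> y t then 1 else 0))"
    let ?A = "(\<Sum>t=1..T. v t * loss U (x t) (y t)) + (\<Sum>t=1..T. gam t)"
    have "?L - ?A \<le> (INF \<eta>\<in>{0<..}. h U ^ 2 / (2 * \<eta>)
            + (\<Sum>t=1..T. (real CARD('k) - 1) / real CARD('k) * loss (W t) (x t) (y t)
                 - v t * loss (W t) (x t) (y t)
                 + \<eta> * (v t)\<^sup>2 * L * loss (W t) (x t) (y t)))"
    proof (rule cINF_greatest)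
      show "{0<..} \<noteq> ({}::real set)" by auto
      fix \<eta> :: real assume e: "\<eta> \<in> {0<..}"
      have am: "h U * sqrt (2 * X) \<le> h U ^ 2 / (2 * \<eta>) + \<eta> * X"
        using amgm[of "h U" X \<eta>] h_nonneg U X0 e by auto
      have eqs: "(\<Sum>t=1..T. (real CARD('k) - 1) / real CARD('k) * loss (W t) (x t) (y t)
                 - v t * loss (W t) (x t) (y t)
                 + \<eta> * (v t)\<^sup>2 * L * loss (W t) (x t) (y t))
          = (\<Sum>t=1..T. c * l t) - (\<Sum>t=1..T. v t * l t) + \<eta> * X"
        by (simp add: X_def c_def l_def sum.distrib sum_subtractf sum_distrib_left mult.assoc)
      show "?L - ?A \<le> h U ^ 2 / (2 * \<eta>)
            + (\<Sum>t=1..T. (real CARD('k) - 1) / real CARD('k) * loss (W t) (x t) (y t)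
                 - v t * loss (W t) (x t) (y t)
                 + \<eta> * (v t)\<^sup>2 * L * loss (W t) (x t) (y t))"
        unfolding eqs using lhs reg am by linarith
    qed
    thus ?thesis by linarith
  qed
qed

end
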